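(* Let $s\ge1$, $n=2s$, let $A$ be the $n\times n$ matrix with $A_{ij}=1$ if $|i-j|\le s-1$ and $0$ otherwise, let $J$ be the $n\times n$ all-ones matrix and $B=J-A$. Label the eigenvalues of $A$ as $|\lambda_1(A)|\ge|\lambda_2(A)|\ge\dots\ge|\lambda_n(A)|$ and those of $B$ as $\gamma_1,\dots,\gamma_n$ with $|\gamma_1|\ge|\gamma_2|\ge\dots\ge|\gamma_n|$. Then $|\lambda_2(A)|=|\gamma_2|$. Moreover, $\lambda_2(A)$ and $\gamma_2$ have the same eigenvector, i.e. there is a nonzero vector which is an eigenvector of $A$ for $\lambda_2(A)$ and an eigenvector of $B$ for $\gamma_2$. *)

theory Defs
  imports "Jordan_Normal_Form.Char_Poly"
begin

definition bandA :: "nat \<Rightarrow> real mat" where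
  "bandA s = mat (2*s) (2*s) (\<lambda>(i,j). if \<bar>int i - int j\<bar> \<le> int s - 1 then 1 else 0)"

definition ones_mat :: "nat \<Rightarrow> real mat" where
  "ones_mat n = mat n n (\<lambda>_. 1)"

definition compB :: "nat \<Rightarrow> real mat" where
  "compB s = ones_mat (2*s) - bandA s"

text \<open>A labelling of the eigenvalues of a square real matrix (listed with algebraic
  multiplicity, i.e. as the roots of the characteristic polynomial) in order of
  non-increasing absolute value.\<close>
definition abs_sorted_eigenvalues :: "real mat \<Rightarrow> real list \<Rightarrow> bool" where
  "abs_sorted_eigenvalues M ls \<longleftrightarrow>
     length ls = dim_row M \<and>
     char_poly M = (\<Prod>a\<leftarrow>ls. [:- a, 1:]) \<and>
     sorted_wrt (\<lambda>x y. \<bar>x\<bar> \<ge> \<bar>y\<bar>) ls"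

end

theory Submission
  imports Defs "Jordan_Normal_Form.Schur_Decomposition"
begin



definition liftm :: "real \<Rightarrow> real mat \<Rightarrow> real mat" where
  "liftm c X = mat (Suc (dim_row X)) (Suc (dim_col X))
     (\<lambda>(i,j). if i = 0 \<and> j = 0 then c else if i = 0 \<or> j = 0 then 0 else X $$ (i-1, j-1))"

lemma liftm_carrier[simp]: "X \<in> carrier_mat n m \<Longrightarrow> liftm c X \<in> carrier_mat (Suc n) (Suc m)"
  unfolding liftm_def by auto

lemma liftm_dims[simp]: "dim_row (liftm c X) = Suc (dim_row X)" "dim_col (liftm c X) = Suc (dim_col X)"
  unfolding liftm_def by auto

lemma liftm_index: "i < Suc (dim_row X) \<Longrightarrow> j < Suc (dim_col X) \<Longrightarrow> liftm c X $$ (i,j) =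
   (if i = 0 \<and> j = 0 then c else if i = 0 \<or> j = 0 then 0 else X $$ (i-1, j-1))"
  unfolding liftm_def by auto

lemma liftm_transpose: "(liftm c X)\<^sup>T = liftm c (X\<^sup>T)"
  by (rule eq_matI, auto simp: liftm_index)

lemma liftm_mult:
  assumes X: "X \<in> carrier_mat n m" and Y: "Y \<in> carrier_mat m k"
  shows "liftm a X * liftm b Y = liftm (a*b) (X*Y)"
proof (rule eq_matI)
  fix i j assume i: "i < dim_row (liftm (a*b) (X*Y))" and j: "j < dim_col (liftm (a*b) (X*Y))"
  have "(liftm a X * liftm b Y) $$ (i,j) = (\<Sum>l<Suc m. liftm a X $$ (i,l) * liftm b Y $$ (l,j))"
    using i j X Y by (auto simp: scalar_prod_def atLeast0LessThan)
  also have "\<dots> = liftm a X $$ (i,0) * liftm b Y $$ (0,j) + (\<Sum>l<m. liftm a X $$ (i,Suc l) * liftm b Y $$ (Suc l,j))"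
    by (rule sum.lessThan_Suc_shift)
  also have "\<dots> = liftm (a*b) (X*Y) $$ (i,j)"
    using i j X Y by (cases i; cases j; auto simp: liftm_index scalar_prod_def atLeast0LessThan)
  finally show "(liftm a X * liftm b Y) $$ (i,j) = liftm (a*b) (X*Y) $$ (i,j)" .
qed (insert X Y, auto)

lemma liftm_one: "liftm 1 (1\<^sub>m n) = 1\<^sub>m (Suc n)"
  by (rule eq_matI, auto simp: liftm_index)



lemma sym_real_eigenvalue:
  fixes M :: "real mat"
  assumes M: "M \<in> carrier_mat n n" and sym: "M\<^sup>T = M" and n: "n > 0"
  shows "\<exists>e. eigenvalue M e"
proof -
  define Mc where "Mc = map_mat complex_of_real M"
  have Mc: "Mc \<in> carrier_mat n n" using M by (auto simp: Mc_def)
  obtain as where cp: "char_poly Mc = (\<Prod>a\<leftarrow>as. [:- a, 1:])" and len: "length as = n"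
    using char_poly_factorized[OF Mc] by blast
  define z where "z = hd as"
  have "as \<noteq> []" using len n by auto
  hence "poly (char_poly Mc) z = 0" unfolding cp z_def by (cases as, auto)
  hence "eigenvalue Mc z" using eigenvalue_root_char_poly[OF Mc] by auto
  then obtain x where ev: "eigenvector Mc x z" unfolding eigenvalue_def by auto
  hence x: "x \<in> carrier_vec n" and x0: "x \<noteq> 0\<^sub>v n" and Mx: "Mc *\<^sub>v x = z \<cdot>\<^sub>v x"
    unfolding eigenvector_def using Mc by auto
  define q where "q = (\<Sum>i<n. \<Sum>j<n. complex_of_real (M $$ (i,j)) * cnj (x $ i) * x $ j)"
  define N where "N = (\<Sum>i<n. cnj (x $ i) * x $ i)"
  have "q = (\<Sum>i<n. cnj (x $ i) * (Mc *\<^sub>v x) $ i)"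
    unfolding q_def using M x
    by (auto simp: Mc_def scalar_prod_def sum_distrib_left atLeast0LessThan intro!: sum.cong)
  also have "\<dots> = z * N" unfolding Mx N_def using x by (auto simp: sum_distrib_left intro!: sum.cong)
  finally have qz: "q = z * N" .
  have "cnj q = (\<Sum>i<n. \<Sum>j<n. complex_of_real (M $$ (i,j)) * x $ i * cnj (x $ j))"
    unfolding q_def by (simp add: cnj_sum)
  also have "\<dots> = (\<Sum>j<n. \<Sum>i<n. complex_of_real (M $$ (i,j)) * x $ i * cnj (x $ j))"
    by (rule sum.swap)
  also have "\<dots> = q" unfolding q_def
  proof (intro sum.cong refl)
    fix i j assume i: "i \<in> {..<n}" and j: "j \<in> {..<n}"
    have "M $$ (i,j) = M $$ (j,i)" using i j M sym
      by (metis carrier_matD(1) carrier_matD(2) index_transpose_mat(1) lessThan_iff)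
    thus "complex_of_real (M $$ (i,j)) * x $ i * cnj (x $ j) = complex_of_real (M $$ (j,i)) * cnj (x $ j) * x $ i"
      by simp
  qed
  finally have cq: "cnj q = q" .
  have Nr: "N = complex_of_real (\<Sum>i<n. (cmod (x $ i))\<^sup>2)"
    unfolding N_def of_real_sum
    by (intro sum.cong refl, metis complex_norm_square mult.commute)
  have "\<exists>i<n. x $ i \<noteq> 0" using x x0 by (metis eq_vecI carrier_vecD index_zero_vec)
  then obtain i0 where i0: "i0 < n" "x $ i0 \<noteq> 0" by auto
  have "(\<Sum>i<n. (cmod (x $ i))\<^sup>2) \<ge> (cmod (x $ i0))\<^sup>2"
    by (rule member_le_sum, insert i0, auto)
  moreover have "(cmod (x $ i0))\<^sup>2 > 0" using i0 by auto
  ultimately have Npos: "(\<Sum>i<n. (cmod (x $ i))\<^sup>2) > 0" by linarith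
  have "cnj z = z"
  proof -
    have "cnj z * N = z * N" using cq qz Nr by (metis complex_cnj_complex_of_real complex_cnj_mult)
    moreover have "N \<noteq> 0" using Npos Nr by (metis less_irrefl of_real_eq_0_iff)
    ultimately show ?thesis by simp
  qed
  hence zr: "z = complex_of_real (Re z)" by (metis Reals_cnj_iff complex_is_Real_iff of_real_Re)
  have "poly (map_poly complex_of_real (char_poly M)) (complex_of_real (Re z)) = 0"
    using \<open>poly (char_poly Mc) z = 0\<close> zr of_real_hom.char_poly_hom[OF M] unfolding Mc_def by metis
  hence "poly (char_poly M) (Re z) = 0" by (simp add: of_real_hom.poly_map_poly)
  thus ?thesis using eigenvalue_root_char_poly[OF M] by auto
qed



lemma conjugate_real_vec[simp]: "conjugate (v :: real vec) = v"
  by (rule eq_vecI, auto)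

lemma self_sprod_nonneg: "(v :: real vec) \<bullet> v \<ge> 0"
  unfolding scalar_prod_def by (auto intro: sum_nonneg)

lemma onb_extend:
  fixes v :: "real vec"
  assumes v: "v \<in> carrier_vec n" and vn: "v \<bullet> v = 1"
  shows "\<exists>W. W \<in> carrier_mat n n \<and> W\<^sup>T * W = 1\<^sub>m n \<and> col W 0 = v"
proof -
  have v0: "v \<noteq> 0\<^sub>v n" using vn v by auto
  have n: "n > 0" using v vn by (cases n, auto simp: scalar_prod_def)
  interpret cof_vec_space n "TYPE(real)" .
  define b where "b = basis_completion v"
  from basis_completion[OF v v0, folded b_def]
  have dist_b: "distinct b" and indep: "\<not> lin_dep (set b)" and b: "set b \<subseteq> carrier_vec n"
    and hdb: "hd b = v" and len_b: "length b = n" by auto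
  define ws where "ws = gram_schmidt n b"
  from gram_schmidt_result[OF b dist_b indep ws_def]
  have orth: "corthogonal ws" and wsc: "set ws \<subseteq> carrier_vec n" and lenw: "length ws = n"
    using len_b by auto
  from hdb len_b n obtain vs where bv: "b = v # vs" by (cases b, auto)
  have hdws: "hd ws = v" unfolding ws_def bv using gram_schmidt_hd[OF v] by simp
  define ws' where "ws' = map (\<lambda>w. (1 / sqrt (w \<bullet> w)) \<cdot>\<^sub>v w) ws"
  define W where "W = mat_of_cols n ws'"
  have wsc': "set ws' \<subseteq> carrier_vec n" using wsc unfolding ws'_def by auto
  have len': "length ws' = n" using lenw unfolding ws'_def by auto
  have Wc: "W \<in> carrier_mat n n" unfolding W_def using len' by auto
  have pos: "ws ! i \<bullet> ws ! i > 0" if i: "i < n" for i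
  proof -
    have "ws ! i \<bullet> ws ! i \<noteq> 0" using corthogonalD[OF orth, of i i] i lenw by auto
    thus ?thesis using self_sprod_nonneg[of "ws ! i"] by linarith
  qed
  have "W\<^sup>T * W = 1\<^sub>m n"
  proof (rule eq_matI)
    fix i j assume i: "i < dim_row (1\<^sub>m n)" and j: "j < dim_col (1\<^sub>m n)"
    hence i: "i < n" and j: "j < n" by auto
    have wi: "ws ! i \<in> carrier_vec n" and wj: "ws ! j \<in> carrier_vec n" using wsc i j lenw by auto
    have wi': "ws' ! i \<in> carrier_vec n" and wj': "ws' ! j \<in> carrier_vec n"
      using wsc' len' i j by (auto dest!: nth_mem)
    have "(W\<^sup>T * W) $$ (i,j) = col W i \<bullet> col W j"
      using i j Wc by auto
    also have "\<dots> = ws' ! i \<bullet> ws' ! j"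
      unfolding W_def using col_mat_of_cols[OF _ wi'] col_mat_of_cols[OF _ wj'] i j len' by simp
    also have "\<dots> = (1 / sqrt (ws ! i \<bullet> ws ! i)) * (1 / sqrt (ws ! j \<bullet> ws ! j)) * (ws ! i \<bullet> ws ! j)"
      unfolding ws'_def using i j lenw wi wj by simp
    also have "\<dots> = 1\<^sub>m n $$ (i,j)"
    proof (cases "i = j")
      case True
      with pos[OF i] show ?thesis using i
        by (simp add: field_simps)
    next
      case False
      hence "ws ! i \<bullet> ws ! j = 0" using corthogonalD[OF orth, of i j] i j lenw by auto
      thus ?thesis using False i j by simp
    qed
    finally show "(W\<^sup>T * W) $$ (i,j) = 1\<^sub>m n $$ (i,j)" .
  qed (insert Wc, auto)
  moreover have "col W 0 = v"
  proof -
    have "ws ! 0 = v" using hdws lenw n by (cases ws, auto)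
    hence "ws' ! 0 = v" unfolding ws'_def using lenw n vn by auto
    moreover have "ws' ! 0 \<in> carrier_vec n" using wsc' len' n by (auto dest!: nth_mem)
    ultimately show ?thesis unfolding W_def using n len' col_mat_of_cols by metis
  qed
  ultimately show ?thesis using Wc by blast
qed


lemma assoc4:
  assumes "a \<in> carrier_mat n n" "b \<in> carrier_mat n n" "c \<in> carrier_mat n n" "d \<in> carrier_mat n n"
  shows "(a * b) * (c * d) = a * (b * c) * d"
proof -
  have "(a * b) * (c * d) = a * (b * (c * d))" using assms by (intro assoc_mult_mat[of _ n n _ n _ n], auto)
  also have "b * (c * d) = (b * c) * d" using assms by (intro assoc_mult_mat[of _ n n _ n _ n, symmetric], auto)
  also have "a * ((b * c) * d) = (a * (b * c)) * d" using assms by (intro assoc_mult_mat[of _ n n _ n _ n, symmetric], auto)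
  finally show ?thesis .
qed

lemma assoc5:
  assumes "a \<in> carrier_mat n n" "b \<in> carrier_mat n n" "m \<in> carrier_mat n n" "c \<in> carrier_mat n n" "d \<in> carrier_mat n n"
  shows "(a * b) * m * (c * d) = a * (b * m * c) * d"
proof -
  have "(a * b) * m = a * (b * m)" using assms by (intro assoc_mult_mat[of _ n n _ n _ n], auto)
  hence "(a * b) * m * (c * d) = (a * (b * m)) * (c * d)" by simp
  also have "\<dots> = a * ((b * m) * c) * d" using assms by (intro assoc4, auto)
  finally show ?thesis .
qed

definition diagm :: "real list \<Rightarrow> real mat" where
  "diagm es = mat (length es) (length es) (\<lambda>(i,j). if i = j then es ! i else 0)"

lemma diagm_carrier[simp]: "diagm es \<in> carrier_mat (length es) (length es)"
  unfolding diagm_def by auto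

lemma diagm_Cons: "diagm (e # es) = liftm e (diagm es)"
  by (rule eq_matI, auto simp: diagm_def liftm_index nth_Cons')

lemma spectral_sym:
  fixes M :: "real mat"
  assumes "M \<in> carrier_mat n n" "M\<^sup>T = M"
  shows "\<exists>W es. W \<in> carrier_mat n n \<and> W\<^sup>T * W = 1\<^sub>m n \<and> length es = n \<and> W\<^sup>T * M * W = diagm es"
  using assms
proof (induction n arbitrary: M)
  case 0
  show ?case
    by (rule exI[of _ "1\<^sub>m 0"], rule exI[of _ "[]"], insert 0, auto intro!: eq_matI simp: diagm_def)
next
  case (Suc n M)
  note M = Suc.prems(1) and sym = Suc.prems(2)
  obtain e where "eigenvalue M e" using sym_real_eigenvalue[OF M sym] by auto
  then obtain x where "eigenvector M x e" unfolding eigenvalue_def by auto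
  hence x: "x \<in> carrier_vec (Suc n)" and x0: "x \<noteq> 0\<^sub>v (Suc n)" and Mx: "M *\<^sub>v x = e \<cdot>\<^sub>v x"
    unfolding eigenvector_def using M by auto
  have xpos: "x \<bullet> x > 0"
  proof -
    have "\<exists>i<Suc n. x $ i \<noteq> 0" using x x0 by (metis eq_vecI carrier_vecD index_zero_vec)
    then obtain i0 where i0: "i0 < Suc n" "x $ i0 \<noteq> 0" by auto
    have "x \<bullet> x = (\<Sum>i<Suc n. (x $ i)\<^sup>2)" using x by (auto simp: scalar_prod_def atLeast0LessThan power2_eq_square)
    also have "\<dots> \<ge> (x $ i0)\<^sup>2" by (rule member_le_sum, insert i0, auto)
    finally show ?thesis using i0 by (smt (verit) zero_less_power2)
  qed
  define v where "v = (1 / sqrt (x \<bullet> x)) \<cdot>\<^sub>v x"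
  have v: "v \<in> carrier_vec (Suc n)" using x unfolding v_def by auto
  have vn: "v \<bullet> v = 1" unfolding v_def using x xpos by simp
  have Mv: "M *\<^sub>v v = e \<cdot>\<^sub>v v" unfolding v_def using Mx x M
    by (metis mult_mat_vec smult_smult_assoc mult.commute)
  obtain W1 where W1: "W1 \<in> carrier_mat (Suc n) (Suc n)" and W1o: "W1\<^sup>T * W1 = 1\<^sub>m (Suc n)"
    and W1v: "col W1 0 = v"
    using onb_extend[OF v vn] by blast
  define A' where "A' = W1\<^sup>T * M * W1"
  have A': "A' \<in> carrier_mat (Suc n) (Suc n)" unfolding A'_def using W1 M by auto
  have A'sym: "A'\<^sup>T = A'"
  proof -
    have W1T: "W1\<^sup>T \<in> carrier_mat (Suc n) (Suc n)" using W1 by auto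
    have c1: "W1\<^sup>T * M \<in> carrier_mat (Suc n) (Suc n)" using W1 M by auto
    have "A'\<^sup>T = W1\<^sup>T * (W1\<^sup>T * M)\<^sup>T" unfolding A'_def using transpose_mult[OF c1 W1] .
    also have "(W1\<^sup>T * M)\<^sup>T = M\<^sup>T * W1" using transpose_mult[OF W1T M] by simp
    also have "W1\<^sup>T * (M\<^sup>T * W1) = A'" unfolding A'_def sym using W1T M W1 by simp
    finally show ?thesis .
  qed
  have col0: "A' $$ (i, 0) = (if i = 0 then e else 0)" if i: "i < Suc n" for i
  proof -
    have "A' $$ (i,0) = (W1\<^sup>T * (M * W1)) $$ (i,0)" unfolding A'_def using W1 M by auto
    also have "\<dots> = row (W1\<^sup>T) i \<bullet> col (M * W1) 0" using i W1 M by auto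
    also have "col (M * W1) 0 = M *\<^sub>v col W1 0" using W1 M by auto
    also have "\<dots> = e \<cdot>\<^sub>v col W1 0" using Mv W1v by simp
    also have "row (W1\<^sup>T) i \<bullet> (e \<cdot>\<^sub>v col W1 0) = e * (row (W1\<^sup>T) i \<bullet> col W1 0)"
      using W1 i by auto
    also have "row (W1\<^sup>T) i \<bullet> col W1 0 = (W1\<^sup>T * W1) $$ (i,0)" using W1 i by auto
    also have "\<dots> = (if i = 0 then 1 else 0)" using W1o i by auto
    finally show ?thesis by auto
  qed
  have row0: "A' $$ (0, j) = (if j = 0 then e else 0)" if j: "j < Suc n" for j
  proof -
    have "A' $$ (0,j) = A'\<^sup>T $$ (j,0)" using A' j by auto
    thus ?thesis using A'sym col0[OF j] by simp
  qed
  define A3 where "A3 = mat n n (\<lambda>(i,j). A' $$ (Suc i, Suc j))"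
  have A3: "A3 \<in> carrier_mat n n" unfolding A3_def by auto
  have A3sym: "A3\<^sup>T = A3"
  proof (rule eq_matI)
    fix i j assume "i < dim_row A3" "j < dim_col A3"
    hence i: "i < n" and j: "j < n" using A3 by auto
    have "A' $$ (Suc j, Suc i) = A'\<^sup>T $$ (Suc i, Suc j)" using A' i j by auto
    thus "A3\<^sup>T $$ (i,j) = A3 $$ (i,j)" unfolding A3_def using i j A'sym by auto
  qed (auto simp: A3_def)
  have A'lift: "A' = liftm e A3"
    by (rule eq_matI, insert A' A3 col0 row0, auto simp: liftm_index A3_def)
  obtain W3 es3 where W3: "W3 \<in> carrier_mat n n" and W3o: "W3\<^sup>T * W3 = 1\<^sub>m n"
    and les3: "length es3 = n" and W3d: "W3\<^sup>T * A3 * W3 = diagm es3"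
    using Suc.IH[OF A3 A3sym] by blast
  define W where "W = W1 * liftm 1 W3"
  have L: "liftm 1 W3 \<in> carrier_mat (Suc n) (Suc n)" using W3 by auto
  have LT: "(liftm 1 W3)\<^sup>T \<in> carrier_mat (Suc n) (Suc n)" using W3 by auto
  have Wc: "W \<in> carrier_mat (Suc n) (Suc n)" unfolding W_def using W1 W3 by auto
  have WT: "W\<^sup>T = (liftm 1 W3)\<^sup>T * W1\<^sup>T" unfolding W_def using transpose_mult[OF W1 L] .
  have W1T: "W1\<^sup>T \<in> carrier_mat (Suc n) (Suc n)" using W1 by auto
  have "W\<^sup>T * W = ((liftm 1 W3)\<^sup>T * W1\<^sup>T) * (W1 * liftm 1 W3)" unfolding WT by (simp add: W_def)
  also have "\<dots> = (liftm 1 W3)\<^sup>T * (W1\<^sup>T * W1) * liftm 1 W3"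
    using assoc4[OF LT W1T W1 L] .
  also have "\<dots> = liftm 1 (W3\<^sup>T) * liftm 1 W3" unfolding W1o using right_mult_one_mat[OF LT]
    by (simp add: liftm_transpose)
  also have "\<dots> = liftm 1 (1\<^sub>m n)" using liftm_mult[of "W3\<^sup>T" n n W3 n 1 1] W3 W3o by auto
  also have "\<dots> = 1\<^sub>m (Suc n)" by (rule liftm_one)
  finally have Wo: "W\<^sup>T * W = 1\<^sub>m (Suc n)" .
  have "W\<^sup>T * M * W = ((liftm 1 W3)\<^sup>T * W1\<^sup>T) * M * (W1 * liftm 1 W3)" unfolding WT by (simp add: W_def)
  also have "\<dots> = (liftm 1 W3)\<^sup>T * A' * liftm 1 W3"
    unfolding A'_def using assoc5[OF LT W1T M W1 L] .
  also have "\<dots> = liftm 1 (W3\<^sup>T) * liftm e A3 * liftm 1 W3" unfolding A'lift liftm_transpose ..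
  also have "\<dots> = liftm (1 * e * 1) (W3\<^sup>T * A3 * W3)"
    using liftm_mult[of "W3\<^sup>T" n n A3 n 1 e] liftm_mult[of "W3\<^sup>T * A3" n n W3 n "1*e" 1] W3 A3 by auto
  also have "\<dots> = diagm (e # es3)" unfolding W3d diagm_Cons by simp
  finally have "W\<^sup>T * M * W = diagm (e # es3)" .
  thus ?case using Wc Wo les3 by (intro exI[of _ W] exI[of _ "e # es3"], auto)
qed




lemma sum_if_eq: "(\<Sum>k\<in>{0..<(n::nat)}. f k * (if k = i then g k else 0)) = (if i < n then f i * g i else (0::'a::comm_semiring_1))"
proof -
  have "(\<Sum>k\<in>{0..<(n::nat)}. f k * (if k = i then g k else 0)) = (\<Sum>k\<in>{0..<n}. if k = i then f k * g k else 0)"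
    by (rule sum.cong, auto)
  also have "\<dots> = (if i < n then f i * g i else 0)" by (subst sum.delta, auto)
  finally show ?thesis .
qed
lemma sum_if_eq': "(\<Sum>k\<in>{0..<(n::nat)}. (if i = k then g k else 0) * f k) = (if i < n then g i * f i else (0::'a::comm_semiring_1))"
proof -
  have "(\<Sum>k\<in>{0..<n}. (if i = k then g k else 0) * f k) = (\<Sum>k\<in>{0..<n}. if k = i then g k * f k else 0)"
    by (rule sum.cong, auto)
  also have "\<dots> = (if i < n then g i * f i else 0)" by (subst sum.delta, auto)
  finally show ?thesis .
qed
lemma prod_linear_nz: "(\<Prod>x\<leftarrow>l. [:- x, 1:]) \<noteq> (0 :: 'a :: idom poly)" by (auto simp add: prod_list_zero_iff)

lemma order_prod_linear:
  "Polynomial.order a (\<Prod>x\<leftarrow>l. [:- x, 1:]) = count (mset l) (a :: 'a :: idom)"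
proof (induction l)
  case Nil
  then show ?case by (simp add: order_1_eq_0)
next
  case (Cons x l)
  have nz: "(\<Prod>x\<leftarrow>l. [:- x, 1:]) \<noteq> (0 :: 'a poly)" by (rule prod_linear_nz)
  have nz2: "[:- x, 1:] * (\<Prod>x\<leftarrow>l. [:- x, 1:]) \<noteq> (0 :: 'a poly)" using prod_linear_nz[of "x # l"] by simp
  have "Polynomial.order a (\<Prod>x\<leftarrow>x # l. [:- x, 1:]) = Polynomial.order a ([:- x, 1:] * (\<Prod>x\<leftarrow>l. [:- x, 1:]))"
    by simp
  also have "\<dots> = Polynomial.order a [:- x, 1:] + Polynomial.order a (\<Prod>x\<leftarrow>l. [:- x, 1:])"
    by (rule order_mult[OF nz2])
  finally have "Polynomial.order a (\<Prod>x\<leftarrow>x # l. [:- x, 1:]) = Polynomial.order a [:- x, 1:] + Polynomial.order a (\<Prod>x\<leftarrow>l. [:- x, 1:])" .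
  thus ?case using Cons by (simp add: order_linear')
qed

lemma mset_unique_linear:
  assumes "(\<Prod>x\<leftarrow>l1. [:- x, 1:]) = (\<Prod>x\<leftarrow>l2. [:- x, 1:] :: 'a :: idom poly)"
  shows "mset l1 = mset l2"
  by (rule multiset_eqI, metis order_prod_linear assms)

lemma root_prod_linear: "poly (\<Prod>x\<leftarrow>l. [:- x, 1:]) (a :: 'a :: idom) = 0 \<longleftrightarrow> a \<in> set l"
  by (induction l, auto simp: poly_prod_list)

lemma diagm_mult_vec': "y \<in> carrier_vec (length es) \<Longrightarrow> diagm es *\<^sub>v y = vec (length es) (\<lambda>i. es ! i * y $ i)"
  by (rule eq_vecI, auto simp: diagm_def scalar_prod_def sum_if_eq')

lemma diagm_mult_vec: "y \<in> carrier_vec (length es) \<Longrightarrow> y \<bullet> (diagm es *\<^sub>v y) = (\<Sum>i<length es. es ! i * (y $ i)\<^sup>2)"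
  by (auto simp: diagm_mult_vec' scalar_prod_def atLeast0LessThan power2_eq_square ac_simps intro!: sum.cong)

lemma spectral_vecs:
  fixes M :: "real mat"
  assumes M: "M \<in> carrier_mat n n" and sym: "M\<^sup>T = M"
  shows "\<exists>es vs. length es = n \<and> length vs = n \<and> char_poly M = (\<Prod>a\<leftarrow>es. [:- a, 1:])
    \<and> (\<forall>i<n. vs ! i \<in> carrier_vec n \<and> M *\<^sub>v vs ! i = es ! i \<cdot>\<^sub>v vs ! i)
    \<and> (\<forall>i<n. \<forall>j<n. vs ! i \<bullet> vs ! j = (if i = j then 1 else 0))
    \<and> (\<forall>x \<in> carrier_vec n. x \<bullet> (M *\<^sub>v x) = (\<Sum>i<n. es ! i * (vs ! i \<bullet> x)\<^sup>2)
           \<and> x \<bullet> x = (\<Sum>i<n. (vs ! i \<bullet> x)\<^sup>2))"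
proof -
  obtain W es where W: "W \<in> carrier_mat n n" and WTW: "W\<^sup>T * W = 1\<^sub>m n" and les: "length es = n"
    and D: "W\<^sup>T * M * W = diagm es" using spectral_sym[OF M sym] by blast
  have WT: "W\<^sup>T \<in> carrier_mat n n" using W by auto
  have WWT: "W * W\<^sup>T = 1\<^sub>m n" using mat_mult_left_right_inverse[OF WT W WTW] .
  have Dc: "diagm es \<in> carrier_mat n n" using les by auto
  have MW: "M * W = W * diagm es"
  proof -
    have "W * diagm es = W * (W\<^sup>T * (M * W))" unfolding D[symmetric] using WT M W by simp
    also have "\<dots> = (W * W\<^sup>T) * (M * W)" using W WT M by (simp add: assoc_mult_mat[of _ n n _ n _ n])
    also have "\<dots> = M * W" unfolding WWT using M W by simp
    finally show ?thesis by simp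
  qed
  have Meq: "M = W * diagm es * W\<^sup>T"
  proof -
    have "M = M * (W * W\<^sup>T)" unfolding WWT using M by simp
    also have "\<dots> = (M * W) * W\<^sup>T" using assoc_mult_mat[OF M W WT] by simp
    finally show ?thesis unfolding MW .
  qed
  have "similar_mat M (diagm es)" unfolding similar_mat_def similar_mat_wit_def Let_def
    using M W WT Dc WWT WTW Meq by (intro exI[of _ W] exI[of _ "W\<^sup>T"], auto)
  hence cp: "char_poly M = (\<Prod>a\<leftarrow>es. [:- a, 1:])"
  proof -
    have ut: "upper_triangular (diagm es)" by (auto simp: upper_triangular_def diagm_def)
    have dg: "diag_mat (diagm es) = es" by (rule nth_equalityI, auto simp: diag_mat_def diagm_def)
    show ?thesis using char_poly_similar[OF \<open>similar_mat M (diagm es)\<close>] char_poly_upper_triangular[OF Dc ut]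
      unfolding dg by simp
  qed
  define vs where "vs = map (col W) [0..<n]"
  have vsi: "vs ! i = col W i" if "i < n" for i using that unfolding vs_def by auto
  have vsc: "vs ! i \<in> carrier_vec n" if "i < n" for i using that W vsi by auto
  have ev: "M *\<^sub>v vs ! i = es ! i \<cdot>\<^sub>v vs ! i" if i: "i < n" for i
  proof -
    have "M *\<^sub>v vs ! i = col (M * W) i" using col_mult2[OF M W i] vsi[OF i] by simp
    also have "\<dots> = col (W * diagm es) i" unfolding MW ..
    also have "\<dots> = es ! i \<cdot>\<^sub>v col W i"
      by (rule eq_vecI, insert i W les, auto simp: diagm_def scalar_prod_def sum_if_eq)
    finally show ?thesis using vsi[OF i] by simp
  qed
  have on: "vs ! i \<bullet> vs ! j = (if i = j then 1 else 0)" if i: "i < n" and j: "j < n" for i j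
  proof -
    have "vs ! i \<bullet> vs ! j = (W\<^sup>T * W) $$ (i,j)" using i j W vsi by auto
    thus ?thesis unfolding WTW using i j by auto
  qed
  have quad: "x \<bullet> (M *\<^sub>v x) = (\<Sum>i<n. es ! i * (vs ! i \<bullet> x)\<^sup>2) \<and> x \<bullet> x = (\<Sum>i<n. (vs ! i \<bullet> x)\<^sup>2)"
    if x: "x \<in> carrier_vec n" for x
  proof -
    define y where "y = W\<^sup>T *\<^sub>v x"
    have y: "y \<in> carrier_vec n" unfolding y_def using W x by auto
    have yi: "y $ i = vs ! i \<bullet> x" if "i < n" for i using that W x vsi unfolding y_def by auto
    have xWy: "x = W *\<^sub>v y" unfolding y_def using W WT x WWT
      by (metis assoc_mult_mat_vec one_mult_mat_vec)
    have "x \<bullet> (M *\<^sub>v x) = x \<bullet> (W *\<^sub>v (diagm es *\<^sub>v y))"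
    proof -
      have "M *\<^sub>v x = (M * W) *\<^sub>v y" using M W y xWy by simp
      also have "\<dots> = W *\<^sub>v (diagm es *\<^sub>v y)" unfolding MW using W Dc y by simp
      finally show ?thesis by simp
    qed
    also have "\<dots> = y \<bullet> (diagm es *\<^sub>v y)"
      using transpose_vec_mult_scalar[OF W _ x, of "diagm es *\<^sub>v y"] Dc y unfolding y_def by auto
    also have "\<dots> = (\<Sum>i<n. es ! i * (y $ i)\<^sup>2)" using diagm_mult_vec[of y es] y les by auto
    finally have 1: "x \<bullet> (M *\<^sub>v x) = (\<Sum>i<n. es ! i * (vs ! i \<bullet> x)\<^sup>2)" using yi by auto
    have "x \<bullet> x = x \<bullet> (W *\<^sub>v y)" using xWy by simp
    also have "\<dots> = y \<bullet> y" using transpose_vec_mult_scalar[OF W y x] unfolding y_def by auto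
    also have "\<dots> = (\<Sum>i<n. (y $ i)\<^sup>2)" using y by (auto simp: scalar_prod_def atLeast0LessThan power2_eq_square)
    finally have 2: "x \<bullet> x = (\<Sum>i<n. (vs ! i \<bullet> x)\<^sup>2)" using yi by auto
    show ?thesis using 1 2 by auto
  qed
  show ?thesis
    by (rule exI[of _ es], rule exI[of _ vs], insert les cp vsc ev on quad, auto simp: vs_def)
qed



lemma amgm_abs: fixes a b r :: real assumes r: "r > 0"
  shows "\<bar>a\<bar> * \<bar>b\<bar> \<le> (r * a\<^sup>2 + b\<^sup>2 / r) / 2"
proof -
  have eq: "(r * a\<^sup>2 + b\<^sup>2 / r) / 2 - \<bar>a\<bar> * \<bar>b\<bar> = (r * \<bar>a\<bar> - \<bar>b\<bar>)\<^sup>2 / (2 * r)"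
    using r by (simp add: field_simps power2_eq_square abs_mult_self_eq)
  have "(r * \<bar>a\<bar> - \<bar>b\<bar>)\<^sup>2 / (2 * r) \<ge> 0" using r by simp
  thus ?thesis using eq by linarith
qed

lemma qbound_gen:
  fixes b :: "nat \<Rightarrow> nat \<Rightarrow> real" and p x :: "nat \<Rightarrow> real"
  assumes nn: "\<And>i j. i < n \<Longrightarrow> j < n \<Longrightarrow> b i j \<ge> 0"
    and sym: "\<And>i j. i < n \<Longrightarrow> j < n \<Longrightarrow> b i j = b j i"
    and pos: "\<And>i. i < n \<Longrightarrow> p i > 0"
    and ev: "\<And>i. i < n \<Longrightarrow> (\<Sum>j<n. b i j * p j) = \<sigma> * p i"
  shows "\<bar>\<Sum>i<n. \<Sum>j<n. b i j * x i * x j\<bar> \<le> \<sigma> * (\<Sum>i<n. (x i)\<^sup>2)"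
proof -
  have "\<bar>\<Sum>i<n. \<Sum>j<n. b i j * x i * x j\<bar> \<le> (\<Sum>i<n. \<Sum>j<n. \<bar>b i j * x i * x j\<bar>)"
    by (rule order_trans[OF sum_abs], rule sum_mono, rule sum_abs)
  also have "\<dots> \<le> (\<Sum>i<n. \<Sum>j<n. b i j * ((p j / p i * (x i)\<^sup>2 + (x j)\<^sup>2 / (p j / p i)) / 2))"
  proof (rule sum_mono, rule sum_mono)
    fix i j assume i: "i \<in> {..<n}" and j: "j \<in> {..<n}"
    have r: "p j / p i > 0" using pos i j by auto
    have "\<bar>b i j * x i * x j\<bar> = b i j * (\<bar>x i\<bar> * \<bar>x j\<bar>)" using nn i j by (simp add: abs_mult)
    also have "\<dots> \<le> b i j * ((p j / p i * (x i)\<^sup>2 + (x j)\<^sup>2 / (p j / p i)) / 2)"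
      by (rule mult_left_mono[OF amgm_abs[OF r]], insert nn i j, auto)
    finally show "\<bar>b i j * x i * x j\<bar> \<le> b i j * ((p j / p i * (x i)\<^sup>2 + (x j)\<^sup>2 / (p j / p i)) / 2)" .
  qed
  also have "\<dots> = (\<Sum>i<n. \<Sum>j<n. (x i)\<^sup>2 / p i * (b i j * p j)) / 2 + (\<Sum>i<n. \<Sum>j<n. (x j)\<^sup>2 / p j * (b i j * p i)) / 2" (is "_ = ?rhs")
  proof -
    have "(\<Sum>i<n. \<Sum>j<n. b i j * ((p j / p i * (x i)\<^sup>2 + (x j)\<^sup>2 / (p j / p i)) / 2))
       = (\<Sum>i<n. \<Sum>j<n. (x i)\<^sup>2 / p i * (b i j * p j) / 2 + (x j)\<^sup>2 / p j * (b i j * p i) / 2)"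
      by (rule sum.cong[OF refl], rule sum.cong[OF refl], insert pos, auto simp: field_simps)
    also have "\<dots> = ?rhs" by (simp add: sum.distrib sum_divide_distrib)
    finally show ?thesis .
  qed
  finally have main: "\<bar>\<Sum>i<n. \<Sum>j<n. b i j * x i * x j\<bar> \<le> (\<Sum>i<n. \<Sum>j<n. (x i)\<^sup>2 / p i * (b i j * p j)) / 2 + (\<Sum>i<n. \<Sum>j<n. (x j)\<^sup>2 / p j * (b i j * p i)) / 2" .
  have "(\<Sum>i<n. \<Sum>j<n. (x j)\<^sup>2 / p j * (b i j * p i)) = (\<Sum>j<n. \<Sum>i<n. (x j)\<^sup>2 / p j * (b j i * p i))"
    by (subst sum.swap, rule sum.cong[OF refl], rule sum.cong[OF refl], insert sym, auto)
  also have "\<dots> = (\<Sum>j<n. (x j)\<^sup>2 / p j * (\<sigma> * p j))"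
    by (rule sum.cong[OF refl], subst sum_distrib_left[symmetric], insert ev, auto)
  also have "\<dots> = \<sigma> * (\<Sum>i<n. (x i)\<^sup>2)"
    unfolding sum_distrib_left by (rule sum.cong[OF refl], insert pos, fastforce)
  finally have e2: "(\<Sum>i<n. \<Sum>j<n. (x j)\<^sup>2 / p j * (b i j * p i)) = \<sigma> * (\<Sum>i<n. (x i)\<^sup>2)" .
  have "(\<Sum>i<n. \<Sum>j<n. (x i)\<^sup>2 / p i * (b i j * p j)) = (\<Sum>i<n. (x i)\<^sup>2 / p i * (\<sigma> * p i))"
    by (rule sum.cong[OF refl], subst sum_distrib_left[symmetric], insert ev, auto)
  also have "\<dots> = \<sigma> * (\<Sum>i<n. (x i)\<^sup>2)"
    unfolding sum_distrib_left by (rule sum.cong[OF refl], insert pos, fastforce)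
  finally have e1: "(\<Sum>i<n. \<Sum>j<n. (x i)\<^sup>2 / p i * (b i j * p j)) = \<sigma> * (\<Sum>i<n. (x i)\<^sup>2)" .
  show ?thesis using main e1 e2 by linarith
qed




definition th :: "nat \<Rightarrow> real" where "th s = pi / (4 * real s + 2)"
definition sig :: "nat \<Rightarrow> real" where "sig s = 1 / (2 * sin (th s))"
definition uu :: "nat \<Rightarrow> nat \<Rightarrow> real" where "uu s k = cos ((2 * real k + 1) * th s)"

lemma sum_cos: "2 * sin t * (\<Sum>k<m. cos ((2 * real k + 1) * t)) = sin (2 * real m * t)"
proof (induction m)
  case 0 then show ?case by simp
next
  case (Suc m)
  define x where "x = (2 * real m + 1) * t"
  have a: "2 * real (Suc m) * t = x + t" unfolding x_def by (simp add: algebra_simps)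
  have b: "2 * real m * t = x - t" unfolding x_def by (simp add: algebra_simps)
  have "2 * sin t * (\<Sum>k<Suc m. cos ((2 * real k + 1) * t)) = sin (2 * real m * t) + 2 * sin t * cos x"
    using Suc by (simp add: algebra_simps x_def)
  also have "\<dots> = sin (2 * real (Suc m) * t)" unfolding a b sin_add sin_diff by (simp add: algebra_simps)
  finally show ?case .
qed

lemma th_pos: "th s > 0" unfolding th_def by simp

lemma th_bound: "(2 * real s + 1) * th s = pi / 2"
  unfolding th_def by (simp add: field_simps)

lemma sin_th_pos: "sin (th s) > 0"
proof -
  have "th s \<le> pi / 2" unfolding th_def by (rule divide_left_mono, auto)
  hence "th s < pi" using pi_gt_zero by linarith
  thus ?thesis using th_pos sin_gt_zero by auto
qed

lemma sig_pos: "sig s > 0" unfolding sig_def using sin_th_pos by simp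

lemma uu_pos: assumes "k < s" shows "uu s k > 0"
proof -
  have "(2 * real k + 1) * th s < (2 * real s + 1) * th s"
    using assms th_pos by (intro mult_strict_right_mono, auto)
  hence "(2 * real k + 1) * th s < pi / 2" using th_bound by simp
  moreover have "(2 * real k + 1) * th s > 0" using th_pos by simp
  ultimately show ?thesis unfolding uu_def by (intro cos_gt_zero_pi, auto)
qed

lemma partial_sum:
  assumes m: "1 \<le> m" "m \<le> s"
  shows "(\<Sum>k<m. uu s k) = sig s * uu s (s - m)"
proof -
  have "2 * sin (th s) * (\<Sum>k<m. uu s k) = sin (2 * real m * th s)"
    unfolding uu_def by (rule sum_cos)
  also have "sin (2 * real m * th s) = cos (pi / 2 - 2 * real m * th s)" by (simp add: cos_sin_eq)
  also have "pi / 2 - 2 * real m * th s = (2 * real (s - m) + 1) * th s"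
    using th_bound[of s] m by (simp add: of_nat_diff algebra_simps)
  finally have "2 * sin (th s) * (\<Sum>k<m. uu s k) = uu s (s - m)" unfolding uu_def .
  thus ?thesis unfolding sig_def using sin_th_pos[of s] by (simp add: field_simps)
qed




lemma sum_lo: "c \<le> (N::nat) \<Longrightarrow> (\<Sum>j<N. if j < c then g j else 0) = (\<Sum>k<c. (g k :: real))"
proof -
  assume c: "c \<le> N"
  have "(\<Sum>j<N. if j < c then g j else 0) = (\<Sum>j<N. if j \<in> {..<c} then g j else 0)" by simp
  also have "\<dots> = sum g ({..<N} \<inter> {..<c})" by (subst sum.inter_restrict, auto)
  also have "{..<N} \<inter> {..<c} = {..<c}" using c by auto
  finally show ?thesis .
qed

lemma sum_hi: "c \<le> (N::nat) \<Longrightarrow> (\<Sum>j<N. if c \<le> j then g (N - 1 - j) else 0) = (\<Sum>k<N - c. (g k :: real))"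
proof -
  assume c: "c \<le> N"
  have "(\<Sum>j<N. if c \<le> j then g (N - 1 - j) else 0) = (\<Sum>j<N. if j \<in> {c..<N} then g (N - 1 - j) else 0)"
    by (rule sum.cong, auto)
  also have "\<dots> = sum (\<lambda>j. g (N - 1 - j)) ({..<N} \<inter> {c..<N})"
    by (subst sum.inter_restrict, auto)
  also have "{..<N} \<inter> {c..<N} = {c..<N}" by auto
  also have "sum (\<lambda>j. g (N - 1 - j)) {c..<N} = (\<Sum>k<N - c. g k)"
    by (rule sum.reindex_bij_witness[of _ "\<lambda>k. N - 1 - k" "\<lambda>j. N - 1 - j"], auto)
  finally show ?thesis .
qed

definition far :: "nat \<Rightarrow> nat \<Rightarrow> nat \<Rightarrow> bool" where
  "far s i j = (i + s \<le> j \<or> j + s \<le> i)"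

lemma A_carrier[simp]: "bandA s \<in> carrier_mat (2*s) (2*s)" unfolding bandA_def by auto
lemma B_carrier[simp]: "compB s \<in> carrier_mat (2*s) (2*s)" unfolding compB_def ones_mat_def
  using A_carrier[of s] by (intro minus_carrier_mat, auto)

lemma A_dims[simp]: "dim_row (bandA s) = 2*s" "dim_col (bandA s) = 2*s" by (simp_all add: bandA_def)
lemma B_dims[simp]: "dim_row (compB s) = 2*s" "dim_col (compB s) = 2*s" by (simp_all add: compB_def ones_mat_def)

lemma A_idx: "i < 2*s \<Longrightarrow> j < 2*s \<Longrightarrow> bandA s $$ (i,j) = (if far s i j then 0 else 1)"
  unfolding bandA_def far_def by auto

lemma B_idx: "i < 2*s \<Longrightarrow> j < 2*s \<Longrightarrow> compB s $$ (i,j) = (if far s i j then 1 else 0)"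
  unfolding compB_def ones_mat_def using A_idx[of i s j] by simp

lemma far_sym: "far s i j = far s j i" unfolding far_def by auto

lemma A_sym: "(bandA s)\<^sup>T = bandA s"
  by (rule eq_matI, insert A_carrier[of s], auto simp: A_idx far_sym)

lemma B_sym: "(compB s)\<^sup>T = compB s"
  by (rule eq_matI, insert B_carrier[of s], auto simp: B_idx far_sym)

lemma mult_vec_B: assumes i: "i < 2*s" and v: "v \<in> carrier_vec (2*s)"
  shows "(compB s *\<^sub>v v) $ i = (\<Sum>j<2*s. if far s i j then v $ j else 0)"
  using i v by (auto simp: scalar_prod_def atLeast0LessThan B_idx intro!: sum.cong)

lemma mult_vec_A: assumes i: "i < 2*s" and v: "v \<in> carrier_vec (2*s)"
  shows "(bandA s *\<^sub>v v) $ i = (\<Sum>j<2*s. v $ j) - (compB s *\<^sub>v v) $ i"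
proof -
  have "(bandA s *\<^sub>v v) $ i = (\<Sum>j<2*s. (if far s i j then 0 else 1) * v $ j)"
    using i v by (auto simp: scalar_prod_def atLeast0LessThan A_idx intro!: sum.cong)
  also have "\<dots> = (\<Sum>j<2*s. v $ j - (if far s i j then v $ j else 0))" by (rule sum.cong, auto)
  finally show ?thesis unfolding mult_vec_B[OF i v] by (simp add: sum_subtractf)
qed

lemma far_lo: "i < s \<Longrightarrow> far s i j = (i + s \<le> j)" unfolding far_def by auto
lemma far_hi: "s \<le> i \<Longrightarrow> j < 2*s \<Longrightarrow> far s i j = (j < i - s + 1)" unfolding far_def by auto

definition pv :: "nat \<Rightarrow> real vec" where
  "pv s = vec (2*s) (\<lambda>i. if i < s then uu s i else uu s (2*s - 1 - i))"
definition wv :: "nat \<Rightarrow> real vec" where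
  "wv s = vec (2*s) (\<lambda>i. if i < s then uu s i else - uu s (2*s - 1 - i))"

lemma pv_dim[simp]: "dim_vec (pv s) = 2*s" unfolding pv_def by auto
lemma wv_dim[simp]: "dim_vec (wv s) = 2*s" unfolding wv_def by auto
lemma pv_carrier[simp]: "pv s \<in> carrier_vec (2*s)" unfolding pv_def by auto
lemma wv_carrier[simp]: "wv s \<in> carrier_vec (2*s)" unfolding wv_def by auto

lemma pv_pos: "i < 2*s \<Longrightarrow> pv s $ i > 0"
  unfolding pv_def by (auto intro!: uu_pos)

lemma B_pv: "compB s *\<^sub>v pv s = sig s \<cdot>\<^sub>v pv s"
proof (rule eq_vecI)
  fix i assume "i < dim_vec (sig s \<cdot>\<^sub>v pv s)"
  hence i: "i < 2*s" by (simp add: pv_def)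
  show "(compB s *\<^sub>v pv s) $ i = (sig s \<cdot>\<^sub>v pv s) $ i"
  proof (cases "i < s")
    case True
    have "(compB s *\<^sub>v pv s) $ i = (\<Sum>j<2*s. if i + s \<le> j then uu s (2*s - 1 - j) else 0)"
      unfolding mult_vec_B[OF i pv_carrier] using True by (intro sum.cong, auto simp: far_lo pv_def)
    also have "\<dots> = (\<Sum>k<2*s - (i+s). uu s k)" by (rule sum_hi, insert True, auto)
    also have "\<dots> = sig s * uu s (s - (2*s - (i+s)))" by (rule partial_sum, insert True, auto)
    also have "s - (2*s - (i+s)) = i" using True by auto
    finally show ?thesis using True i by (simp add: pv_def)
  next
    case False
    have "(compB s *\<^sub>v pv s) $ i = (\<Sum>j<2*s. if j < i - s + 1 then uu s j else 0)"
      unfolding mult_vec_B[OF i pv_carrier] using False i by (intro sum.cong, auto simp: far_hi pv_def)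
    also have "\<dots> = (\<Sum>k<i - s + 1. uu s k)" by (rule sum_lo, insert False i, auto)
    also have "\<dots> = sig s * uu s (s - (i - s + 1))" by (rule partial_sum, insert False i, auto)
    also have "s - (i - s + 1) = 2*s - 1 - i" using False i by auto
    finally show ?thesis using False i by (simp add: pv_def)
  qed
qed (simp add: pv_def)

lemma B_wv: "compB s *\<^sub>v wv s = (- sig s) \<cdot>\<^sub>v wv s"
proof (rule eq_vecI)
  fix i assume "i < dim_vec ((- sig s) \<cdot>\<^sub>v wv s)"
  hence i: "i < 2*s" by (simp add: wv_def)
  show "(compB s *\<^sub>v wv s) $ i = ((- sig s) \<cdot>\<^sub>v wv s) $ i"
  proof (cases "i < s")
    case True
    have "(compB s *\<^sub>v wv s) $ i = - (\<Sum>j<2*s. if i + s \<le> j then uu s (2*s - 1 - j) else 0)"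
      unfolding mult_vec_B[OF i wv_carrier] sum_negf[symmetric] using True by (intro sum.cong, auto simp: far_lo wv_def)
    also have "(\<Sum>j<2*s. if i + s \<le> j then uu s (2*s - 1 - j) else 0) = (\<Sum>k<2*s - (i+s). uu s k)" by (rule sum_hi, insert True, auto)
    also have "\<dots> = sig s * uu s (s - (2*s - (i+s)))" by (rule partial_sum, insert True, auto)
    also have "s - (2*s - (i+s)) = i" using True by auto
    finally show ?thesis using True i by (simp add: wv_def)
  next
    case False
    have "(compB s *\<^sub>v wv s) $ i = (\<Sum>j<2*s. if j < i - s + 1 then uu s j else 0)"
      unfolding mult_vec_B[OF i wv_carrier] using False i by (intro sum.cong, auto simp: far_hi wv_def)
    also have "\<dots> = (\<Sum>k<i - s + 1. uu s k)" by (rule sum_lo, insert False i, auto)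
    also have "\<dots> = sig s * uu s (s - (i - s + 1))" by (rule partial_sum, insert False i, auto)
    also have "s - (i - s + 1) = 2*s - 1 - i" using False i by auto
    finally show ?thesis using False i by (simp add: wv_def)
  qed
qed (simp add: wv_def)

lemma wv_sum: "(\<Sum>j<2*s. wv s $ j) = 0"
proof -
  have "(\<Sum>j<2*s. wv s $ j) = (\<Sum>j<2*s. if j < s then uu s j else 0) - (\<Sum>j<2*s. if s \<le> j then uu s (2*s - 1 - j) else 0)"
    unfolding sum_subtractf[symmetric] by (rule sum.cong, auto simp: wv_def)
  also have "(\<Sum>j<2*s. if j < s then uu s j else 0) = (\<Sum>k<s. uu s k)" by (rule sum_lo, auto)
  also have "(\<Sum>j<2*s. if s \<le> j then uu s (2*s - 1 - j) else 0) = (\<Sum>k<2*s - s. uu s k)" by (rule sum_hi, auto)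
  finally show ?thesis by simp
qed

lemma A_wv: "bandA s *\<^sub>v wv s = sig s \<cdot>\<^sub>v wv s"
proof (rule eq_vecI)
  fix i assume "i < dim_vec (sig s \<cdot>\<^sub>v wv s)"
  hence i: "i < 2*s" by (simp add: wv_def)
  have "(bandA s *\<^sub>v wv s) $ i = 0 - (compB s *\<^sub>v wv s) $ i"
    using mult_vec_A[OF i wv_carrier] wv_sum by simp
  also have "\<dots> = (sig s \<cdot>\<^sub>v wv s) $ i" unfolding B_wv using i by (simp add: wv_def)
  finally show "(bandA s *\<^sub>v wv s) $ i = (sig s \<cdot>\<^sub>v wv s) $ i" .
qed (simp add: wv_def)

lemma wv_nz: "s \<ge> 1 \<Longrightarrow> wv s \<noteq> 0\<^sub>v (2*s)"
proof
  assume s: "s \<ge> 1" and "wv s = 0\<^sub>v (2*s)"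
  hence "wv s $ 0 = 0" by simp
  moreover have "wv s $ 0 = uu s 0" using s by (simp add: wv_def)
  ultimately show False using uu_pos[of 0 s] s by simp
qed




lemma quad_form: assumes M: "(M :: real mat) \<in> carrier_mat n n" and x: "x \<in> carrier_vec n"
  shows "x \<bullet> (M *\<^sub>v x) = (\<Sum>i<n. \<Sum>j<n. M $$ (i,j) * x $ i * x $ j)"
  using M x by (auto simp: scalar_prod_def atLeast0LessThan sum_distrib_left intro!: sum.cong)

lemma self_dot: "(x :: real vec) \<in> carrier_vec n \<Longrightarrow> x \<bullet> x = (\<Sum>i<n. (x $ i)\<^sup>2)"
  by (auto simp: scalar_prod_def atLeast0LessThan power2_eq_square intro!: sum.cong)

lemma self_dot_pos: assumes x: "x \<in> carrier_vec n" and x0: "x \<noteq> 0\<^sub>v n" shows "(x :: real vec) \<bullet> x > 0"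
proof -
  have "\<exists>i<n. x $ i \<noteq> 0" using x x0 by (metis eq_vecI carrier_vecD index_zero_vec)
  then obtain i0 where i0: "i0 < n" "x $ i0 \<noteq> 0" by auto
  have "x \<bullet> x = (\<Sum>i<n. (x $ i)\<^sup>2)" using self_dot[OF x] .
  also have "\<dots> \<ge> (x $ i0)\<^sup>2" by (rule member_le_sum, insert i0, auto)
  finally show ?thesis using i0 by (smt (verit) zero_less_power2)
qed

lemma B_quad: assumes x: "x \<in> carrier_vec (2*s)"
  shows "\<bar>x \<bullet> (compB s *\<^sub>v x)\<bar> \<le> sig s * (x \<bullet> x)"
proof -
  have "\<bar>\<Sum>i<2*s. \<Sum>j<2*s. compB s $$ (i,j) * x $ i * x $ j\<bar> \<le> sig s * (\<Sum>i<2*s. (x $ i)\<^sup>2)"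
  proof (rule qbound_gen[where p = "\<lambda>i. pv s $ i"])
    fix i j assume i: "i < 2*s" and j: "j < 2*s"
    show "compB s $$ (i,j) \<ge> 0" using i j by (simp add: B_idx)
    show "compB s $$ (i,j) = compB s $$ (j,i)" using i j by (simp add: B_idx far_sym)
  next
    fix i assume i: "i < 2*s"
    show "pv s $ i > 0" using pv_pos[OF i] .
    have "(\<Sum>j<2*s. compB s $$ (i,j) * pv s $ j) = (compB s *\<^sub>v pv s) $ i"
      using i by (auto simp: scalar_prod_def atLeast0LessThan pv_def)
    also have "\<dots> = sig s * pv s $ i" unfolding B_pv using i by simp
    finally show "(\<Sum>j<2*s. compB s $$ (i,j) * pv s $ j) = sig s * pv s $ i" .
  qed
  thus ?thesis using quad_form[OF B_carrier x] self_dot[OF x] by simp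
qed

lemma vsum_def_lemma: "(x :: real vec) \<in> carrier_vec n \<Longrightarrow> x \<bullet> vec n (\<lambda>_. 1) = (\<Sum>i<n. x $ i)"
  by (auto simp: scalar_prod_def atLeast0LessThan intro!: sum.cong)

lemma A_quad: assumes x: "x \<in> carrier_vec (2*s)"
  shows "x \<bullet> (bandA s *\<^sub>v x) = (\<Sum>i<2*s. x $ i)\<^sup>2 - x \<bullet> (compB s *\<^sub>v x)"
proof -
  have "x \<bullet> (bandA s *\<^sub>v x) = (\<Sum>i<2*s. x $ i * (bandA s *\<^sub>v x) $ i)"
    using x by (simp add: scalar_prod_def atLeast0LessThan mult.commute)
  also have "\<dots> = (\<Sum>i<2*s. x $ i * ((\<Sum>j<2*s. x $ j) - (compB s *\<^sub>v x) $ i))"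
    by (rule sum.cong[OF refl], subst mult_vec_A[OF _ x], auto)
  also have "\<dots> = (\<Sum>i<2*s. x $ i) * (\<Sum>j<2*s. x $ j) - (\<Sum>i<2*s. x $ i * (compB s *\<^sub>v x) $ i)"
    by (simp only: right_diff_distrib sum_subtractf sum_distrib_right mult.commute)
  also have "(\<Sum>i<2*s. x $ i * (compB s *\<^sub>v x) $ i) = x \<bullet> (compB s *\<^sub>v x)"
    using x by (auto simp: scalar_prod_def atLeast0LessThan)
  finally show ?thesis by (simp add: power2_eq_square)
qed

lemma B_eig_bound: assumes y: "y \<in> carrier_vec (2*s)" "y \<noteq> 0\<^sub>v (2*s)" and ev: "compB s *\<^sub>v y = e \<cdot>\<^sub>v y"
  shows "\<bar>e\<bar> \<le> sig s"
proof -
  have "y \<bullet> (compB s *\<^sub>v y) = e * (y \<bullet> y)" unfolding ev using y by simp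
  hence "\<bar>e\<bar> * (y \<bullet> y) \<le> sig s * (y \<bullet> y)" using B_quad[OF y(1)] self_dot_pos[OF y]
    by (simp add: abs_mult)
  thus ?thesis using self_dot_pos[OF y] by simp
qed

lemma A_eig_lower: assumes y: "y \<in> carrier_vec (2*s)" "y \<noteq> 0\<^sub>v (2*s)" and ev: "bandA s *\<^sub>v y = e \<cdot>\<^sub>v y"
  shows "e \<ge> - sig s"
proof -
  have "y \<bullet> (bandA s *\<^sub>v y) = e * (y \<bullet> y)" unfolding ev using y by simp
  moreover have "(\<Sum>i<2*s. y $ i)\<^sup>2 \<ge> 0" by simp
  moreover have "y \<bullet> (compB s *\<^sub>v y) \<le> sig s * (y \<bullet> y)" using B_quad[OF y(1)] by (simp add: abs_le_iff)
  ultimately have "e * (y \<bullet> y) \<ge> (- sig s) * (y \<bullet> y)" using A_quad[OF y(1)] by linarith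
  thus ?thesis using self_dot_pos[OF y] mult_le_cancel_right_pos by blast
qed

lemma A_quad_zero: assumes x: "x \<in> carrier_vec (2*s)" and z: "(\<Sum>i<2*s. x $ i) = 0"
  shows "x \<bullet> (bandA s *\<^sub>v x) \<le> sig s * (x \<bullet> x)"
  using A_quad[OF x] B_quad[OF x] z by simp

definition cnt :: "nat \<Rightarrow> nat \<Rightarrow> real" where
  "cnt s j = (\<Sum>i<2*s. if far s j i then 1 else 0)"

lemma cnt_val: assumes j: "j < 2*s" shows "cnt s j = (if j < s then real (s - j) else real (j - s + 1))"
proof (cases "j < s")
  case True
  have "cnt s j = (\<Sum>i<2*s. if j + s \<le> i then (\<lambda>_. 1::real) (2*s - 1 - i) else 0)"
    unfolding cnt_def using True by (intro sum.cong, auto simp: far_lo)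
  also have "\<dots> = (\<Sum>k<2*s - (j+s). 1)" by (rule sum_hi, insert True, auto)
  finally show ?thesis using True by auto
next
  case False
  have "cnt s j = (\<Sum>i<2*s. if i < j - s + 1 then (\<lambda>_. 1::real) i else 0)"
    unfolding cnt_def using False j by (intro sum.cong, auto simp: far_hi)
  also have "\<dots> = (\<Sum>k<j - s + 1. 1)" by (rule sum_lo, insert False j, auto)
  finally show ?thesis using False by auto
qed

lemma cnt_le: "j < 2*s \<Longrightarrow> cnt s j \<le> real s"
  by (auto simp: cnt_val)

lemma sig_less: assumes s: "s \<ge> 2" shows "sig s < real s"
proof -
  let ?p = "\<lambda>i. pv s $ i"
  have "sig s * (\<Sum>i<2*s. ?p i) = (\<Sum>i<2*s. (compB s *\<^sub>v pv s) $ i)"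
    unfolding B_pv sum_distrib_left by (rule sum.cong, auto)
  also have "\<dots> = (\<Sum>i<2*s. \<Sum>j<2*s. if far s i j then ?p j else 0)"
    by (rule sum.cong[OF refl], rule mult_vec_B, auto)
  also have "\<dots> = (\<Sum>j<2*s. \<Sum>i<2*s. if far s i j then ?p j else 0)"
    by (rule sum.swap)
  also have "\<dots> = (\<Sum>j<2*s. cnt s j * ?p j)"
    unfolding cnt_def sum_distrib_right by (intro sum.cong refl, auto simp: far_sym)
  also have "\<dots> = (\<Sum>j<2*s. real s * ?p j) - (\<Sum>j<2*s. (real s - cnt s j) * ?p j)"
    unfolding sum_subtractf[symmetric] by (intro sum.cong refl, simp add: left_diff_distrib)
  finally have eq: "sig s * (\<Sum>i<2*s. ?p i) = (\<Sum>j<2*s. real s * ?p j) - (\<Sum>j<2*s. (real s - cnt s j) * ?p j)" .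
  have "(\<Sum>j<2*s. (real s - cnt s j) * ?p j) \<ge> (real s - cnt s 1) * ?p 1"
    by (rule member_le_sum, insert s, auto intro!: mult_nonneg_nonneg cnt_le less_imp_le[OF pv_pos])
  moreover have "(real s - cnt s 1) * ?p 1 > 0" using s cnt_val[of 1 s] pv_pos[of 1 s] by auto
  moreover have "(\<Sum>j<2*s. real s * ?p j) = real s * (\<Sum>i<2*s. ?p i)" by (simp add: sum_distrib_left)
  ultimately have "sig s * (\<Sum>i<2*s. ?p i) < real s * (\<Sum>i<2*s. ?p i)"
    using eq by linarith
  moreover have "(\<Sum>i<2*s. ?p i) > 0" using s by (intro sum_pos, auto intro: pv_pos simp: lessThan_empty_iff)
  ultimately show ?thesis by simp
qed

lemma B_ones: "i < 2*s \<Longrightarrow> (compB s *\<^sub>v vec (2*s) (\<lambda>_. 1)) $ i = cnt s i"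
  unfolding cnt_def by (subst mult_vec_B, auto intro!: sum.cong)

lemma ones_A: "vec (2*s) (\<lambda>_. 1) \<bullet> (bandA s *\<^sub>v vec (2*s) (\<lambda>_. 1)) \<ge> 2 * real s * real s"
proof -
  let ?o = "vec (2*s) (\<lambda>_. 1::real)"
  have "?o \<bullet> (bandA s *\<^sub>v ?o) = (\<Sum>i<2*s. (2 * real s - cnt s i))"
  proof -
    have "?o \<bullet> (bandA s *\<^sub>v ?o) = (\<Sum>i<2*s. (bandA s *\<^sub>v ?o) $ i)" by (auto simp: scalar_prod_def atLeast0LessThan)
    also have "\<dots> = (\<Sum>i<2*s. (2 * real s - cnt s i))"
    proof (rule sum.cong[OF refl])
      fix i assume "i \<in> {..<2*s}"
      hence i: "i < 2*s" by auto
      show "(bandA s *\<^sub>v ?o) $ i = 2 * real s - cnt s i"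
        unfolding mult_vec_A[OF i vec_carrier] B_ones[OF i] by simp
    qed
    finally show ?thesis .
  qed
  also have "\<dots> \<ge> (\<Sum>i<2*s. real s)" by (rule sum_mono, insert cnt_le, auto)
  finally show ?thesis by simp
qed




lemma two_idx:
  assumes "i < length l" "j < length l" "i \<noteq> j" "P (l ! i)" "P (l ! j)"
  shows "length (filter P l) \<ge> 2"
proof -
  have "{i, j} \<subseteq> {k. k < length l \<and> P (l ! k)}" using assms by auto
  hence "card {i, j} \<le> card {k. k < length l \<and> P (l ! k)}" by (intro card_mono, auto)
  thus ?thesis using assms(3) by (simp add: length_filter_conv_card)
qed

lemma idx_two:
  assumes "length (filter P l) \<ge> 2"
  shows "\<exists>i j. i < length l \<and> j < length l \<and> i \<noteq> j \<and> P (l ! i) \<and> P (l ! j)"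
proof -
  define S where "S = {k. k < length l \<and> P (l ! k)}"
  have c: "card S \<ge> 2" using assms by (simp add: length_filter_conv_card S_def)
  have "S \<noteq> {}" using c by (metis card.empty not_numeral_le_zero)
  then obtain i where i: "i \<in> S" by auto
  have "card (S - {i}) \<ge> 1" using c i by (simp add: card_Diff_singleton)
  hence "S - {i} \<noteq> {}" by (metis card.empty not_one_le_zero)
  then obtain j where j: "j \<in> S - {i}" by auto
  show ?thesis using i j unfolding S_def by blast
qed

lemma sorted_abs_second:
  assumes sorted: "sorted_wrt (\<lambda>x y. \<bar>x\<bar> \<ge> \<bar>y\<bar>) (l :: real list)"
    and gt: "length (filter (\<lambda>x. c < \<bar>x\<bar>) l) \<le> 1"
    and ge: "length (filter (\<lambda>x. c \<le> \<bar>x\<bar>) l) \<ge> 2"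
  shows "\<bar>l ! 1\<bar> = c"
proof -
  have len: "length l \<ge> 2" using ge length_filter_le[of "\<lambda>x. c \<le> \<bar>x\<bar>" l] by linarith
  obtain a l1 where l1: "l = a # l1" using len by (cases l, auto)
  obtain b rest where l2: "l1 = b # rest" using len l1 by (cases l1, auto)
  have l: "l = a # b # rest" using l1 l2 by simp
  have ab: "\<bar>b\<bar> \<le> \<bar>a\<bar>" using sorted unfolding l by simp
  have br: "\<forall>y\<in>set rest. \<bar>y\<bar> \<le> \<bar>b\<bar>" using sorted unfolding l by simp
  show ?thesis
  proof (rule ccontr)
    assume ne: "\<bar>l ! 1\<bar> \<noteq> c"
    show False
    proof (cases "\<bar>b\<bar> > c")
      case True
      hence "c < \<bar>a\<bar>" using ab by linarith
      hence "length (filter (\<lambda>x. c < \<bar>x\<bar>) l) = Suc (Suc (length (filter (\<lambda>x. c < \<bar>x\<bar>) rest)))"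
        using True unfolding l by simp
      thus False using gt by simp
    next
      case False
      hence bc: "\<bar>b\<bar> < c" using ne unfolding l by simp
      have "filter (\<lambda>x. c \<le> \<bar>x\<bar>) rest = []" using br bc by (auto simp: filter_empty_conv)
      hence "filter (\<lambda>x. c \<le> \<bar>x\<bar>) l = filter (\<lambda>x. c \<le> \<bar>x\<bar>) [a]" using bc unfolding l by simp
      hence "length (filter (\<lambda>x. c \<le> \<bar>x\<bar>) l) \<le> 1" by simp
      thus False using ge by simp
    qed
  qed
qed

lemma filter_len_mset: "mset l1 = mset l2 \<Longrightarrow> length (filter P l1) = length (filter P l2)"
  by (metis mset_filter size_mset)

lemma sorted_abs_map: "sorted_wrt (\<lambda>x y. \<bar>x\<bar> \<ge> \<bar>y\<bar>) (xs :: real list) = sorted_wrt (\<lambda>a b. a \<ge> b) (map abs xs)"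
  by (simp add: sorted_wrt_map)

lemma swap_second:
  assumes sorted: "sorted_wrt (\<lambda>x y. \<bar>x\<bar> \<ge> \<bar>y\<bar>) (l :: real list)"
    and len: "length l \<ge> 2" and c: "c \<in> set l" and abs: "\<bar>l ! 1\<bar> = \<bar>c\<bar>"
  shows "\<exists>l'. mset l' = mset l \<and> sorted_wrt (\<lambda>x y. \<bar>x\<bar> \<ge> \<bar>y\<bar>) l' \<and> l' ! 1 = c"
proof -
  obtain k where k: "k < length l" "l ! k = c" using c by (auto simp: in_set_conv_nth)
  define l' where "l' = l[k := l ! 1, 1 := l ! k]"
  have m: "mset l' = mset l" unfolding l'_def by (rule mset_swap, insert k len, auto)
  have len': "length l' = length l" unfolding l'_def by simp
  have "map abs l' = map abs l"
  proof (rule nth_equalityI)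
    show "length (map abs l') = length (map abs l)" using len' by simp
    fix i assume i: "i < length (map abs l')"
    hence i': "i < length l" using len' by simp
    show "map abs l' ! i = map abs l ! i"
      using i' k len abs unfolding l'_def by (auto simp: nth_list_update)
  qed
  hence "sorted_wrt (\<lambda>x y. \<bar>x\<bar> \<ge> \<bar>y\<bar>) l'" using sorted unfolding sorted_abs_map by simp
  moreover have "l' ! 1 = c" unfolding l'_def using k len by simp
  ultimately show ?thesis using m by blast
qed




lemma prod_list_mset_eq: "mset l1 = mset l2 \<Longrightarrow> (\<Prod>a\<leftarrow>l1. f a) = (\<Prod>a\<leftarrow>l2. (f a :: 'a :: comm_monoid_mult))"
  by (metis mset_map prod_mset_prod_list)

lemma root_eigvec:
  fixes M :: "real mat"
  assumes M: "M \<in> carrier_mat n n" and r: "poly (char_poly M) e = 0"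
  shows "\<exists>y. y \<in> carrier_vec n \<and> y \<noteq> 0\<^sub>v n \<and> M *\<^sub>v y = e \<cdot>\<^sub>v y"
  using r eigenvalue_root_char_poly[OF M] M unfolding eigenvalue_def eigenvector_def by auto

lemma eigvec_root:
  fixes M :: "real mat"
  assumes M: "M \<in> carrier_mat n n" and y: "y \<in> carrier_vec n" "y \<noteq> 0\<^sub>v n" and ev: "M *\<^sub>v y = e \<cdot>\<^sub>v y"
  shows "poly (char_poly M) e = 0"
proof -
  have "eigenvector M y e" unfolding eigenvector_def using M y ev by auto
  hence "eigenvalue M e" unfolding eigenvalue_def by auto
  thus ?thesis using eigenvalue_root_char_poly[OF M] by auto
qed

lemma sig1: "sig 1 = 1"
proof -
  have "(\<Sum>k<1. uu 1 k) = sig 1 * uu 1 (1 - 1)" by (rule partial_sum, auto)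
  thus ?thesis using uu_pos[of 0 1] by simp
qed

lemma bandA1: "bandA 1 = 1\<^sub>m 2"
  by (rule eq_matI, auto simp: A_idx far_def)

lemma A_root_lower: "poly (char_poly (bandA s)) e = 0 \<Longrightarrow> e \<ge> - sig s"
  using root_eigvec[OF A_carrier] A_eig_lower by blast

lemma B_root_bound: "poly (char_poly (compB s)) e = 0 \<Longrightarrow> \<bar>e\<bar> \<le> sig s"
  using root_eigvec[OF B_carrier] B_eig_bound by blast

lemma pv_nz: "s \<ge> 1 \<Longrightarrow> pv s \<noteq> 0\<^sub>v (2*s)"
proof
  assume s: "s \<ge> 1" and "pv s = 0\<^sub>v (2*s)"
  hence "pv s $ 0 = 0" by simp
  thus False using pv_pos[of 0 s] s by simp
qed

lemma A_sig_root: "s \<ge> 1 \<Longrightarrow> poly (char_poly (bandA s)) (sig s) = 0"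
  by (rule eigvec_root[OF A_carrier wv_carrier wv_nz A_wv])

lemma B_sig_roots: "s \<ge> 1 \<Longrightarrow> poly (char_poly (compB s)) (sig s) = 0 \<and> poly (char_poly (compB s)) (- sig s) = 0"
  using eigvec_root[OF B_carrier pv_carrier pv_nz B_pv] eigvec_root[OF B_carrier wv_carrier wv_nz B_wv] by auto

lemma sum_vec_lin: assumes "x \<in> carrier_vec n" "y \<in> carrier_vec n"
  shows "(\<Sum>k<n. (a \<cdot>\<^sub>v x + b \<cdot>\<^sub>v y) $ k) = a * (\<Sum>k<n. x $ k) + b * (\<Sum>k<n. (y $ k :: real))"
proof -
  have "(\<Sum>k<n. (a \<cdot>\<^sub>v x + b \<cdot>\<^sub>v y) $ k) = (\<Sum>k<n. a * x $ k + b * y $ k)"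
    by (rule sum.cong, insert assms, auto)
  thus ?thesis by (simp add: sum.distrib sum_distrib_left)
qed

lemma dot_lin: assumes x: "x \<in> carrier_vec n" and y: "y \<in> carrier_vec n"
  shows "(a \<cdot>\<^sub>v x + b \<cdot>\<^sub>v y) \<bullet> (c \<cdot>\<^sub>v x + d \<cdot>\<^sub>v y) = a * c * (x \<bullet> x) + a * d * (x \<bullet> y) + b * c * (y \<bullet> x) + b * d * ((y \<bullet> y) :: real)"
proof -
  have "(a \<cdot>\<^sub>v x + b \<cdot>\<^sub>v y) \<bullet> (c \<cdot>\<^sub>v x + d \<cdot>\<^sub>v y) = (a \<cdot>\<^sub>v x) \<bullet> (c \<cdot>\<^sub>v x + d \<cdot>\<^sub>v y) + (b \<cdot>\<^sub>v y) \<bullet> (c \<cdot>\<^sub>v x + d \<cdot>\<^sub>v y)"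
    by (rule add_scalar_prod_distrib[of _ n], insert x y, auto)
  also have "(a \<cdot>\<^sub>v x) \<bullet> (c \<cdot>\<^sub>v x + d \<cdot>\<^sub>v y) = (a \<cdot>\<^sub>v x) \<bullet> (c \<cdot>\<^sub>v x) + (a \<cdot>\<^sub>v x) \<bullet> (d \<cdot>\<^sub>v y)"
    by (rule scalar_prod_add_distrib[of _ n], insert x y, auto)
  also have "(b \<cdot>\<^sub>v y) \<bullet> (c \<cdot>\<^sub>v x + d \<cdot>\<^sub>v y) = (b \<cdot>\<^sub>v y) \<bullet> (c \<cdot>\<^sub>v x) + (b \<cdot>\<^sub>v y) \<bullet> (d \<cdot>\<^sub>v y)"
    by (rule scalar_prod_add_distrib[of _ n], insert x y, auto)
  finally show ?thesis using x y by (simp add: ac_simps)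
qed

lemma A_gt_count:
  assumes s: "s \<ge> 1" and cp: "char_poly (bandA s) = (\<Prod>a\<leftarrow>ls. [:- a, 1:])"
  shows "length (filter (\<lambda>x. sig s < \<bar>x\<bar>) ls) \<le> 1"
proof -
  obtain ea va where lea: "length ea = 2*s" and lva: "length va = 2*s"
    and cpa: "char_poly (bandA s) = (\<Prod>a\<leftarrow>ea. [:- a, 1:])"
    and ev: "\<forall>i<2*s. va ! i \<in> carrier_vec (2*s) \<and> bandA s *\<^sub>v va ! i = ea ! i \<cdot>\<^sub>v va ! i"
    and on: "\<forall>i<2*s. \<forall>j<2*s. va ! i \<bullet> va ! j = (if i = j then 1 else 0)"
    using spectral_vecs[OF A_carrier A_sym] by blast
  have m: "mset ls = mset ea" using mset_unique_linear cp cpa by metis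
  show ?thesis
  proof (rule ccontr)
    assume "\<not> ?thesis"
    hence "length (filter (\<lambda>x. sig s < \<bar>x\<bar>) ea) \<ge> 2" using filter_len_mset[OF m] by simp
    then obtain i j where ij: "i < 2*s" "j < 2*s" "i \<noteq> j" "sig s < \<bar>ea ! i\<bar>" "sig s < \<bar>ea ! j\<bar>"
      using idx_two lea by metis
    have root: "poly (char_poly (bandA s)) (ea ! k) = 0" if "k < 2*s" for k
      unfolding cpa root_prod_linear using that lea by auto
    have ei: "ea ! i > sig s" using A_root_lower[OF root[OF ij(1)]] ij(4) by linarith
    have ej: "ea ! j > sig s" using A_root_lower[OF root[OF ij(2)]] ij(5) by linarith
    define x where "x = va ! i"
    define y where "y = va ! j"
    have x: "x \<in> carrier_vec (2*s)" and Ax: "bandA s *\<^sub>v x = ea ! i \<cdot>\<^sub>v x" using ev ij unfolding x_def by auto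
    have y: "y \<in> carrier_vec (2*s)" and Ay: "bandA s *\<^sub>v y = ea ! j \<cdot>\<^sub>v y" using ev ij unfolding y_def by auto
    have xx: "x \<bullet> x = 1" and yy: "y \<bullet> y = 1" and xy: "x \<bullet> y = 0" and yx: "y \<bullet> x = 0"
      using on ij unfolding x_def y_def by auto
    define sx where "sx = (\<Sum>k<2*s. x $ k)"
    define sy where "sy = (\<Sum>k<2*s. y $ k)"
    define a where "a = (if sx = 0 \<and> sy = 0 then 1 else sy)"
    define b where "b = (if sx = 0 \<and> sy = 0 then 0 else - sx)"
    define z where "z = a \<cdot>\<^sub>v x + b \<cdot>\<^sub>v y"
    have z: "z \<in> carrier_vec (2*s)" unfolding z_def using x y by auto
    have sz: "(\<Sum>k<2*s. z $ k) = 0" unfolding z_def sum_vec_lin[OF x y] sx_def[symmetric] sy_def[symmetric]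
      unfolding a_def b_def by auto
    have ab: "a\<^sup>2 + b\<^sup>2 > 0" unfolding a_def b_def by (auto intro: add_nonneg_pos add_pos_nonneg)
    have Az: "bandA s *\<^sub>v z = (a * ea ! i) \<cdot>\<^sub>v x + (b * ea ! j) \<cdot>\<^sub>v y"
      unfolding z_def using x y Ax Ay
      by (simp add: mult_add_distrib_mat_vec[OF A_carrier] mult_mat_vec[OF A_carrier] smult_smult_assoc)
    have "z \<bullet> (bandA s *\<^sub>v z) = a\<^sup>2 * ea ! i + b\<^sup>2 * ea ! j"
      unfolding Az unfolding z_def dot_lin[OF x y] xx yy xy yx by (simp add: power2_eq_square)
    moreover have "z \<bullet> z = a\<^sup>2 + b\<^sup>2"
      unfolding z_def dot_lin[OF x y] xx yy xy yx by (simp add: power2_eq_square)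
    moreover have "z \<bullet> (bandA s *\<^sub>v z) \<le> sig s * (z \<bullet> z)" by (rule A_quad_zero[OF z sz])
    ultimately have le: "a\<^sup>2 * (ea ! i - sig s) + b\<^sup>2 * (ea ! j - sig s) \<le> 0" by (simp add: algebra_simps)
    have "a\<^sup>2 * (ea ! i - sig s) + b\<^sup>2 * (ea ! j - sig s) > 0"
    proof (cases "a = 0")
      case True
      hence "b \<noteq> 0" using ab by auto
      thus ?thesis using True ej by simp
    next
      case False
      have "a\<^sup>2 * (ea ! i - sig s) > 0" using False ei by simp
      moreover have "b\<^sup>2 * (ea ! j - sig s) \<ge> 0" using ej by simp
      ultimately show ?thesis by linarith
    qed
    thus False using le by linarith
  qed
qed




lemma A_ge_count:
  assumes s: "s \<ge> 1" and cp: "char_poly (bandA s) = (\<Prod>a\<leftarrow>ls. [:- a, 1:])" and len: "length ls = 2*s"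
  shows "length (filter (\<lambda>x. sig s \<le> \<bar>x\<bar>) ls) \<ge> 2"
proof (cases "s = 1")
  case True
  have "\<forall>x\<in>set ls. x = 1"
  proof
    fix x assume "x \<in> set ls"
    hence "poly (char_poly (bandA s)) x = 0" unfolding cp root_prod_linear .
    then obtain y where y0: "y \<in> carrier_vec (2*s)" "y \<noteq> 0\<^sub>v (2*s)" and ev0: "bandA s *\<^sub>v y = x \<cdot>\<^sub>v y"
      using root_eigvec[OF A_carrier[of s]] by blast
    have y: "y \<in> carrier_vec 2" "y \<noteq> 0\<^sub>v 2" using y0 True by auto
    have "bandA s *\<^sub>v y = y" using True bandA1 y by simp
    hence ev: "y = x \<cdot>\<^sub>v y" using ev0 by simp
    have "\<exists>k<2. y $ k \<noteq> 0" using y by (metis eq_vecI carrier_vecD index_zero_vec)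
    then obtain k where k: "k < 2" "y $ k \<noteq> 0" by auto
    have "y $ k = x * y $ k" using arg_cong[OF ev, of "\<lambda>v. v $ k"] y k by auto
    thus "x = 1" using k by simp
  qed
  hence "filter (\<lambda>x. sig s \<le> \<bar>x\<bar>) ls = ls" using True sig1 by (intro filter_True, auto)
  thus ?thesis using len True by simp
next
  case False
  hence s2: "s \<ge> 2" using s by auto
  obtain ea va where lea: "length ea = 2*s" and lva: "length va = 2*s"
    and cpa: "char_poly (bandA s) = (\<Prod>a\<leftarrow>ea. [:- a, 1:])"
    and quad: "\<forall>x \<in> carrier_vec (2*s). x \<bullet> (bandA s *\<^sub>v x) = (\<Sum>i<2*s. ea ! i * (va ! i \<bullet> x)\<^sup>2)
           \<and> x \<bullet> x = (\<Sum>i<2*s. (va ! i \<bullet> x)\<^sup>2)"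
    using spectral_vecs[OF A_carrier A_sym] by blast
  have m: "mset ls = mset ea" using mset_unique_linear cp cpa by metis
  have "\<exists>e\<in>set ea. e > sig s"
  proof (rule ccontr)
    assume "\<not> ?thesis"
    hence le: "\<forall>i<2*s. ea ! i \<le> sig s" using lea by (auto simp: all_set_conv_all_nth)
    define o1 where "o1 = vec (2*s) (\<lambda>_. 1::real)"
    have o1: "o1 \<in> carrier_vec (2*s)" unfolding o1_def by auto
    have "o1 \<bullet> (bandA s *\<^sub>v o1) = (\<Sum>i<2*s. ea ! i * (va ! i \<bullet> o1)\<^sup>2)" using quad o1 by auto
    also have "\<dots> \<le> (\<Sum>i<2*s. sig s * (va ! i \<bullet> o1)\<^sup>2)"
      by (rule sum_mono, rule mult_right_mono, insert le, auto)
    also have "\<dots> = sig s * (o1 \<bullet> o1)" using quad o1 by (auto simp: sum_distrib_left)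
    also have "o1 \<bullet> o1 = 2 * real s" unfolding o1_def by (simp add: scalar_prod_def)
    finally have "o1 \<bullet> (bandA s *\<^sub>v o1) \<le> sig s * (2 * real s)" .
    moreover have "o1 \<bullet> (bandA s *\<^sub>v o1) \<ge> 2 * real s * real s" unfolding o1_def by (rule ones_A)
    ultimately have "real s * (2 * real s) \<le> sig s * (2 * real s)" by (simp add: algebra_simps)
    hence "real s \<le> sig s" using s by simp
    thus False using sig_less[OF s2] by simp
  qed
  then obtain e where e: "e \<in> set ls" "e > sig s" using m by (metis mset_eq_setD)
  have "sig s \<in> set ls" using A_sig_root[OF s] unfolding cp root_prod_linear .
  then obtain i where i: "i < length ls" "ls ! i = sig s" by (auto simp: in_set_conv_nth)
  obtain j where j: "j < length ls" "ls ! j = e" using e by (auto simp: in_set_conv_nth)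
  have "i \<noteq> j" using i j e by auto
  thus ?thesis using two_idx[OF i(1) j(1)] i j e sig_pos[of s] by auto
qed

lemma B_counts:
  assumes s: "s \<ge> 1" and cp: "char_poly (compB s) = (\<Prod>a\<leftarrow>gs. [:- a, 1:])"
  shows "length (filter (\<lambda>x. sig s < \<bar>x\<bar>) gs) \<le> 1" "length (filter (\<lambda>x. sig s \<le> \<bar>x\<bar>) gs) \<ge> 2"
proof -
  have "\<forall>x\<in>set gs. \<bar>x\<bar> \<le> sig s"
  proof
    fix x assume "x \<in> set gs"
    hence "poly (char_poly (compB s)) x = 0" unfolding cp root_prod_linear .
    thus "\<bar>x\<bar> \<le> sig s" by (rule B_root_bound)
  qed
  hence "filter (\<lambda>x. sig s < \<bar>x\<bar>) gs = []" by (auto simp: filter_empty_conv)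
  thus "length (filter (\<lambda>x. sig s < \<bar>x\<bar>) gs) \<le> 1" by simp
  have "sig s \<in> set gs" "- sig s \<in> set gs" using B_sig_roots[OF s] unfolding cp root_prod_linear by auto
  then obtain i j where i: "i < length gs" "gs ! i = sig s" and j: "j < length gs" "gs ! j = - sig s"
    by (auto simp: in_set_conv_nth)
  have "i \<noteq> j" using i j sig_pos[of s] by auto
  thus "length (filter (\<lambda>x. sig s \<le> \<bar>x\<bar>) gs) \<ge> 2" using two_idx[OF i(1) j(1)] i j sig_pos[of s] by auto
qed

lemma part1:
  assumes s: "s \<ge> 1"
    and ls: "abs_sorted_eigenvalues (bandA s) ls" and gs: "abs_sorted_eigenvalues (compB s) gs"
  shows "\<bar>ls ! 1\<bar> = sig s" "\<bar>gs ! 1\<bar> = sig s"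
proof -
  from ls have l1: "length ls = 2*s" and l2: "char_poly (bandA s) = (\<Prod>a\<leftarrow>ls. [:- a, 1:])"
    and l3: "sorted_wrt (\<lambda>x y. \<bar>x\<bar> \<ge> \<bar>y\<bar>) ls"
    unfolding abs_sorted_eigenvalues_def by auto
  show "\<bar>ls ! 1\<bar> = sig s"
    by (rule sorted_abs_second[OF l3 A_gt_count[OF s l2] A_ge_count[OF s l2 l1]])
  from gs have g2: "char_poly (compB s) = (\<Prod>a\<leftarrow>gs. [:- a, 1:])"
    and g3: "sorted_wrt (\<lambda>x y. \<bar>x\<bar> \<ge> \<bar>y\<bar>) gs"
    unfolding abs_sorted_eigenvalues_def by auto
  show "\<bar>gs ! 1\<bar> = sig s"
    by (rule sorted_abs_second[OF g3 B_counts[OF s g2]])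
qed

lemma sorted_exists:
  assumes M: "M \<in> carrier_mat n n" and cp: "char_poly M = (\<Prod>a\<leftarrow>es. [:- a, 1:])" and len: "length es = n"
  shows "abs_sorted_eigenvalues M (sort_key (\<lambda>x. - \<bar>x\<bar>) es)"
proof -
  let ?l = "sort_key (\<lambda>x. - \<bar>x\<bar>) es"
  have m: "mset ?l = mset es" by simp
  have "length ?l = dim_row M" using M len by simp
  moreover have "char_poly M = (\<Prod>a\<leftarrow>?l. [:- a, 1:])" unfolding cp by (rule prod_list_mset_eq[OF m[symmetric]])
  moreover have "sorted_wrt (\<lambda>x y. \<bar>x\<bar> \<ge> \<bar>y\<bar>) ?l"
    using sorted_sort_key[of "\<lambda>x. - \<bar>x\<bar>" es] by (simp add: sorted_wrt_map)
  ultimately show ?thesis unfolding abs_sorted_eigenvalues_def by auto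
qed

lemma put_second:
  assumes l: "abs_sorted_eigenvalues M l" and len: "length l \<ge> 2" and c: "c \<in> set l" and a: "\<bar>l ! 1\<bar> = \<bar>c\<bar>"
  shows "\<exists>l'. abs_sorted_eigenvalues M l' \<and> l' ! 1 = c"
proof -
  from l have l1: "length l = dim_row M" and l2: "char_poly M = (\<Prod>a\<leftarrow>l. [:- a, 1:])"
    and l3: "sorted_wrt (\<lambda>x y. \<bar>x\<bar> \<ge> \<bar>y\<bar>) l"
    unfolding abs_sorted_eigenvalues_def by auto
  obtain l' where m: "mset l' = mset l" and so: "sorted_wrt (\<lambda>x y. \<bar>x\<bar> \<ge> \<bar>y\<bar>) l'" and c': "l' ! 1 = c"
    using swap_second[OF l3 len c a] by blast
  have "length l' = dim_row M" using l1 m by (metis size_mset)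
  moreover have "char_poly M = (\<Prod>a\<leftarrow>l'. [:- a, 1:])" unfolding l2 by (rule prod_list_mset_eq[OF m[symmetric]])
  ultimately show ?thesis using so c' unfolding abs_sorted_eigenvalues_def by blast
qed

theorem theorem9:
  fixes s :: nat
  assumes "s \<ge> 1"
  shows "(\<forall>ls gs. abs_sorted_eigenvalues (bandA s) ls \<and> abs_sorted_eigenvalues (compB s) gs
            \<longrightarrow> \<bar>ls ! 1\<bar> = \<bar>gs ! 1\<bar>)
       \<and> (\<exists>ls gs v. abs_sorted_eigenvalues (bandA s) ls \<and> abs_sorted_eigenvalues (compB s) gs
            \<and> eigenvector (bandA s) v (ls ! 1) \<and> eigenvector (compB s) v (gs ! 1))"
proof
  note s = assms
  show "\<forall>ls gs. abs_sorted_eigenvalues (bandA s) ls \<and> abs_sorted_eigenvalues (compB s) gs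
            \<longrightarrow> \<bar>ls ! 1\<bar> = \<bar>gs ! 1\<bar>"
    using part1[OF s] by auto
  obtain ea where lea: "length ea = 2*s" and cpa: "char_poly (bandA s) = (\<Prod>a\<leftarrow>ea. [:- a, 1:])"
    using spectral_vecs[OF A_carrier A_sym] by blast
  obtain eb where leb: "length eb = 2*s" and cpb: "char_poly (compB s) = (\<Prod>a\<leftarrow>eb. [:- a, 1:])"
    using spectral_vecs[OF B_carrier B_sym] by blast
  define la where "la = sort_key (\<lambda>x. - \<bar>x\<bar>) ea"
  define lb where "lb = sort_key (\<lambda>x. - \<bar>x\<bar>) eb"
  have la: "abs_sorted_eigenvalues (bandA s) la" unfolding la_def by (rule sorted_exists[OF A_carrier cpa lea])
  have lb: "abs_sorted_eigenvalues (compB s) lb" unfolding lb_def by (rule sorted_exists[OF B_carrier cpb leb])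
  have lenla: "length la \<ge> 2" and lenlb: "length lb \<ge> 2" using la lb s unfolding abs_sorted_eigenvalues_def by auto
  have cpla: "char_poly (bandA s) = (\<Prod>a\<leftarrow>la. [:- a, 1:])" and cplb: "char_poly (compB s) = (\<Prod>a\<leftarrow>lb. [:- a, 1:])"
    using la lb unfolding abs_sorted_eigenvalues_def by auto
  have "sig s \<in> set la" using A_sig_root[OF s] unfolding cpla root_prod_linear .
  moreover have "\<bar>la ! 1\<bar> = \<bar>sig s\<bar>" using part1(1)[OF s la lb] sig_pos[of s] by simp
  ultimately obtain ls where ls: "abs_sorted_eigenvalues (bandA s) ls" and ls1: "ls ! 1 = sig s"
    using put_second[OF la lenla] by blast
  have "- sig s \<in> set lb" using B_sig_roots[OF s] unfolding cplb root_prod_linear by auto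
  moreover have "\<bar>lb ! 1\<bar> = \<bar>- sig s\<bar>" using part1(2)[OF s la lb] sig_pos[of s] by simp
  ultimately obtain gs where gs: "abs_sorted_eigenvalues (compB s) gs" and gs1: "gs ! 1 = - sig s"
    using put_second[OF lb lenlb] by blast
  have "eigenvector (bandA s) (wv s) (ls ! 1)" unfolding ls1 eigenvector_def using A_wv wv_nz[OF s] by auto
  moreover have "eigenvector (compB s) (wv s) (gs ! 1)" unfolding gs1 eigenvector_def using B_wv wv_nz[OF s] by auto
  ultimately show "\<exists>ls gs v. abs_sorted_eigenvalues (bandA s) ls \<and> abs_sorted_eigenvalues (compB s) gs
            \<and> eigenvector (bandA s) v (ls ! 1) \<and> eigenvector (compB s) v (gs ! 1)"
    using ls gs by blast
qed


end
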